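(* Let $\mathbb{X}$ be a discrete group with identity $\circ$, and let $\mu$ be a finitely supported probability measure on $\mathbb{X}$ satisfying (A1) $\mu(xzx^{-1})=\mu(z)$ for all $x,z\in\mathbb{X}$ and (A2) $\mu(z)=\mu(z^{-1})$ for all $z\in\mathbb{X}$. Fix $z\in\mathbb{X}$ and $n\in\mathbb{N}$. There exists a function $\phi\colon\mathbb{X}^n\times[n+1]\to\mathbb{X}^{n+1}$ such that for all $(w,i)\in\mathbb{X}^n\times[n+1]$: (i) $\mathrm{val}(\phi(w,i))=\mathrm{val}(w)z$; (ii) $\mu^{\otimes(n+1)}(\phi(w,i))=\mu^{\otimes n}(w)\mu(z)$; (iii) $|\phi^{-1}(\phi(w,i))|=1+\ell_z(w)$; (iv) a sequence $\eta\in\mathbb{X}^{n+1}$ is in the image of $\phi$ if and only if $\ell_z(\eta)\neq 0$.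
   Context: $[m]=\{1,\ldots,m\}$. For a sequence $w=(w_1,\ldots,w_m)\in\mathbb{X}^m$: $\mathrm{val}(w):=w_1w_2\cdots w_m$ (the empty product being $\circ$), $\mu^{\otimes m}(w):=\prod_{j=1}^m\mu(w_j)$, and $\ell_z(w):=\sum_{j=1}^m\mathbf{1}\{w_j=(w_{j+1}\cdots w_m)\,z\,(w_{j+1}\cdots w_m)^{-1}\}$, where for $j=m$ the product $w_{j+1}\cdots w_m$ is $\circ$. *)

theory Defs
  imports Complex_Main "HOL-Algebra.Group"
begin

definition gval :: "('a, 'b) monoid_scheme \<Rightarrow> 'a list \<Rightarrow> 'a" where
  "gval G w = foldr (\<lambda>x y. x \<otimes>\<^bsub>G\<^esub> y) w \<one>\<^bsub>G\<^esub>"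

definition mu_prod :: "('a \<Rightarrow> real) \<Rightarrow> 'a list \<Rightarrow> real" where
  "mu_prod \<mu> w = prod_list (map \<mu> w)"

text \<open>ell_z(w): number of positions j (0-based here) with
  w_j = (w_{j+1}...w_m) z (w_{j+1}...w_m)^{-1}.\<close>
definition ell :: "('a, 'b) monoid_scheme \<Rightarrow> 'a \<Rightarrow> 'a list \<Rightarrow> nat" where
  "ell G z w = card {j. j < length w \<and>
     w ! j = gval G (drop (Suc j) w) \<otimes>\<^bsub>G\<^esub> z \<otimes>\<^bsub>G\<^esub> inv\<^bsub>G\<^esub> (gval G (drop (Suc j) w))}"

definition seqs :: "('a, 'b) monoid_scheme \<Rightarrow> nat \<Rightarrow> 'a list set" where
  "seqs G m = {w. set w \<subseteq> carrier G \<and> length w = m}"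

end

theory Submission
  imports Defs
begin

definition cjz :: "('a, 'b) monoid_scheme \<Rightarrow> 'a \<Rightarrow> 'a list \<Rightarrow> 'a" where
  "cjz G z s = gval G s \<otimes>\<^bsub>G\<^esub> z \<otimes>\<^bsub>G\<^esub> inv\<^bsub>G\<^esub> (gval G s)"

definition insz :: "('a, 'b) monoid_scheme \<Rightarrow> 'a \<Rightarrow> 'a list \<Rightarrow> nat \<Rightarrow> 'a list" where
  "insz G z w k = take k w @ cjz G z (drop k w) # drop k w"

definition Pz :: "('a, 'b) monoid_scheme \<Rightarrow> 'a \<Rightarrow> 'a list \<Rightarrow> nat \<Rightarrow> bool" where
  "Pz G z w j = (j < length w \<and> w ! j = cjz G z (drop (Suc j) w))"

lemma ell_Pz: "ell G z w = card {j. Pz G z w j}"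
  unfolding ell_def Pz_def cjz_def by simp

lemma finite_Pz: "finite {j. Pz G z w j}"
  by (rule finite_subset[of _ "{..<length w}"]) (auto simp: Pz_def)

lemma gval_Cons: "gval G (x # xs) = x \<otimes>\<^bsub>G\<^esub> gval G xs"
  by (simp add: gval_def)

lemma gval_Nil: "gval G [] = \<one>\<^bsub>G\<^esub>"
  by (simp add: gval_def)

context group
begin

lemma gval_closed: "set xs \<subseteq> carrier G \<Longrightarrow> gval G xs \<in> carrier G"
  by (induction xs) (auto simp: gval_Cons gval_Nil)

lemma gval_append: "set xs \<subseteq> carrier G \<Longrightarrow> set ys \<subseteq> carrier G \<Longrightarrow>
   gval G (xs @ ys) = gval G xs \<otimes> gval G ys"
  by (induction xs) (auto simp: gval_Cons gval_Nil gval_closed m_assoc)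

lemma cjz_closed: "z \<in> carrier G \<Longrightarrow> set s \<subseteq> carrier G \<Longrightarrow> cjz G z s \<in> carrier G"
  by (simp add: cjz_def gval_closed)

lemma insz_set: "z \<in> carrier G \<Longrightarrow> set w \<subseteq> carrier G \<Longrightarrow> set (insz G z w k) \<subseteq> carrier G"
  unfolding insz_def using cjz_closed[of z "drop k w"]
  by (auto dest: in_set_takeD in_set_dropD)

lemma insz_length: "k \<le> length w \<Longrightarrow> length (insz G z w k) = Suc (length w)"
  unfolding insz_def by simp

lemma insz_gval: assumes "z \<in> carrier G" "set w \<subseteq> carrier G"
  shows "gval G (insz G z w k) = gval G w \<otimes> z"
proof -
  have t: "set (take k w) \<subseteq> carrier G" and d: "set (drop k w) \<subseteq> carrier G"
    using assms by (auto dest: in_set_takeD in_set_dropD)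
  define s where "s = gval G (drop k w)"
  have s: "s \<in> carrier G" using d gval_closed s_def by auto
  have "gval G (insz G z w k) = gval G (take k w) \<otimes> (cjz G z (drop k w) \<otimes> s)"
    unfolding insz_def s_def
    using t d cjz_closed[OF assms(1) d] by (simp add: gval_append gval_Cons)
  also have "cjz G z (drop k w) \<otimes> s = s \<otimes> z"
    unfolding cjz_def s_def[symmetric] using s assms(1) by (simp add: m_assoc)
  also have "gval G (take k w) \<otimes> (s \<otimes> z) = gval G w \<otimes> z"
    using t d s assms(1) gval_append[OF t d] unfolding s_def
    by (simp add: m_assoc[symmetric] gval_closed)
  finally show ?thesis .
qed

lemma cjz_shift: assumes "z \<in> carrier G" "set t \<subseteq> carrier G" "set u \<subseteq> carrier G"
  and "gval G t = gval G u \<otimes> z"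
  shows "cjz G z t = cjz G z u"
proof -
  have u: "gval G u \<in> carrier G" using assms gval_closed by auto
  show ?thesis unfolding cjz_def assms(4) using u assms(1)
    by (simp add: inv_mult_group m_assoc) (simp add: m_assoc[symmetric])
qed

lemma drop_insz_lt: "j < k \<Longrightarrow> k \<le> length w \<Longrightarrow>
  drop (Suc j) (insz G z w k) = insz G z (drop (Suc j) w) (k - Suc j)"
  unfolding insz_def by (simp add: drop_take)

lemma Pz_insz_lt: assumes "z \<in> carrier G" "set w \<subseteq> carrier G" "j < k" "k \<le> length w"
  shows "Pz G z (insz G z w k) j = Pz G z w j"
proof -
  have d: "set (drop (Suc j) w) \<subseteq> carrier G" using assms by (auto dest: in_set_dropD)
  have n: "insz G z w k ! j = w ! j" using assms unfolding insz_def by (simp add: nth_append)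
  have c: "cjz G z (drop (Suc j) (insz G z w k)) = cjz G z (drop (Suc j) w)"
    unfolding drop_insz_lt[OF assms(3,4)]
    by (rule cjz_shift[OF assms(1) insz_set[OF assms(1) d] d insz_gval[OF assms(1) d]])
  show ?thesis unfolding Pz_def n c using assms insz_length by auto
qed

lemma Pz_insz_eq: assumes "k \<le> length w"
  shows "Pz G z (insz G z w k) k"
  using assms unfolding Pz_def insz_def by (simp add: nth_append)

lemma Pz_insz_gt: assumes "k \<le> j" "k \<le> length w"
  shows "Pz G z (insz G z w k) (Suc j) = Pz G z w j"
proof -
  have "insz G z w k ! Suc j = drop k w ! (j - k)"
    using assms unfolding insz_def by (simp add: nth_append)
  moreover have "drop (Suc (Suc j)) (insz G z w k) = drop (Suc j) w"
    using assms unfolding insz_def by (simp add: Suc_diff_le)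
  ultimately show ?thesis using assms unfolding Pz_def by (auto simp: insz_length)
qed

lemma Pz_insz_set: assumes "z \<in> carrier G" "set w \<subseteq> carrier G" "k \<le> length w"
  shows "{j. Pz G z (insz G z w k) j} = insert k ((\<lambda>j. if j < k then j else Suc j) ` {j. Pz G z w j})"
  (is "?L = ?R")
proof (intro equalityI subsetI)
  fix j assume "j \<in> ?L"
  then have P: "Pz G z (insz G z w k) j" by simp
  show "j \<in> ?R"
  proof (cases "j < k")
    case True thus ?thesis using Pz_insz_lt[OF assms(1,2) True assms(3)] P by force
  next
    case False
    show ?thesis
    proof (cases "j = k")
      case False
      then obtain j' where j': "j = Suc j'" "k \<le> j'" using \<open>\<not> j < k\<close>
        by (metis Suc_le_eq le_neq_implies_less nat_le_linear not0_implies_Suc not_less0 Suc_le_D)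
      then show ?thesis using Pz_insz_gt[OF j'(2) assms(3)] P
        by (auto intro!: image_eqI[of _ _ j'])
    qed simp
  qed
next
  fix j assume "j \<in> ?R"
  then show "j \<in> ?L"
    using Pz_insz_lt[OF assms(1,2) _ assms(3)] Pz_insz_eq[OF assms(3)] Pz_insz_gt[OF _ assms(3)]
    by (auto split: if_splits)
qed

lemma ell_insz: assumes "z \<in> carrier G" "set w \<subseteq> carrier G" "k \<le> length w"
  shows "card {j. Pz G z (insz G z w k) j} = Suc (card {j. Pz G z w j})"
proof -
  let ?f = "\<lambda>j::nat. if j < k then j else Suc j"
  have inj: "inj ?f" by (auto simp: inj_def split: if_splits)
  have nk: "k \<notin> ?f ` {j. Pz G z w j}" by auto
  show ?thesis unfolding Pz_insz_set[OF assms]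
    using finite_Pz[of G z w] nk card_image[OF inj_on_subset[OF inj subset_UNIV]]
    by simp
qed

definition delz :: "'a list \<Rightarrow> nat \<Rightarrow> 'a list" where
  "delz xs j = take j xs @ drop (Suc j) xs"

lemma insz_delz: "Pz G z e j \<Longrightarrow> insz G z (delz e j) j = e"
  unfolding Pz_def insz_def delz_def
  by (simp add: min_def) (metis id_take_nth_drop)

lemma delz_insz: "k \<le> length w \<Longrightarrow> delz (insz G z w k) k = w"
  unfolding insz_def delz_def by simp

lemma delz_set: "set (delz e j) \<subseteq> set e"
  unfolding delz_def by (auto dest: in_set_takeD in_set_dropD)

lemma delz_length: "j < length e \<Longrightarrow> length (delz e j) = length e - 1"
  unfolding delz_def by simp

end

theorem lemma1:
  fixes G :: "('a, 'b) monoid_scheme" and \<mu> :: "'a \<Rightarrow> real" and z :: 'a and n :: nat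
  assumes grp: "group G"
    and nonneg: "\<forall>x\<in>carrier G. \<mu> x \<ge> 0"
    and fin_supp: "finite {x\<in>carrier G. \<mu> x \<noteq> 0}"
    and prob: "(\<Sum>x\<in>{x\<in>carrier G. \<mu> x \<noteq> 0}. \<mu> x) = 1"
    and A1: "\<forall>x\<in>carrier G. \<forall>y\<in>carrier G. \<mu> (x \<otimes>\<^bsub>G\<^esub> y \<otimes>\<^bsub>G\<^esub> inv\<^bsub>G\<^esub> x) = \<mu> y"
    and A2: "\<forall>y\<in>carrier G. \<mu> y = \<mu> (inv\<^bsub>G\<^esub> y)"
    and z: "z \<in> carrier G"
  shows "\<exists>\<phi> :: 'a list \<times> nat \<Rightarrow> 'a list.
           (\<forall>w\<in>seqs G n. \<forall>i\<in>{1..n+1}.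
              \<phi> (w, i) \<in> seqs G (n+1)
            \<and> gval G (\<phi> (w, i)) = gval G w \<otimes>\<^bsub>G\<^esub> z
            \<and> mu_prod \<mu> (\<phi> (w, i)) = mu_prod \<mu> w * \<mu> z
            \<and> card {p \<in> seqs G n \<times> {1..n+1}. \<phi> p = \<phi> (w, i)} = 1 + ell G z w)
         \<and> (\<forall>\<eta>\<in>seqs G (n+1). \<eta> \<in> \<phi> ` (seqs G n \<times> {1..n+1}) \<longleftrightarrow> ell G z \<eta> \<noteq> 0)"
proof -
  interpret group G by (rule grp)
  define \<phi> where "\<phi> = (\<lambda>(w, i). insz G z w (i - 1))"
  have phi: "\<phi> (w, i) = insz G z w (i - 1)" for w i by (simp add: \<phi>_def)
  have fib: "{p \<in> seqs G n \<times> {1..n+1}. \<phi> p = e} = (\<lambda>j. (delz e j, Suc j)) ` {j. Pz G z e j}"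
    if e: "e \<in> seqs G (n+1)" for e
  proof (intro equalityI subsetI)
    fix p assume "p \<in> {p \<in> seqs G n \<times> {1..n+1}. \<phi> p = e}"
    then obtain w i where p: "p = (w, i)" "w \<in> seqs G n" "i \<in> {1..n+1}" "insz G z w (i - 1) = e"
      by (auto simp: phi)
    have k: "i - 1 \<le> length w" using p by (auto simp: seqs_def)
    have "Pz G z e (i - 1)" using Pz_insz_eq[OF k, where z=z] p by simp
    moreover have "delz e (i - 1) = w" using delz_insz[OF k, where z=z] p by simp
    ultimately show "p \<in> (\<lambda>j. (delz e j, Suc j)) ` {j. Pz G z e j}"
      using p by (auto intro!: image_eqI[of _ _ "i - 1"])
  next
    fix p assume "p \<in> (\<lambda>j. (delz e j, Suc j)) ` {j. Pz G z e j}"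
    then obtain j where p: "p = (delz e j, Suc j)" and P: "Pz G z e j" by auto
    have jl: "j < length e" using P by (simp add: Pz_def)
    have "delz e j \<in> seqs G n" using e delz_set[of e j] delz_length[OF jl]
      by (auto simp: seqs_def)
    moreover have "Suc j \<in> {1..n+1}" using jl e by (auto simp: seqs_def)
    moreover have "\<phi> p = e" using insz_delz[OF P] p by (simp add: phi)
    ultimately show "p \<in> {p \<in> seqs G n \<times> {1..n+1}. \<phi> p = e}" using p by auto
  qed
  have cardfib: "card {p \<in> seqs G n \<times> {1..n+1}. \<phi> p = e} = ell G z e"
    if e: "e \<in> seqs G (n+1)" for e
    unfolding fib[OF e] ell_Pz
    by (rule card_image) (auto simp: inj_on_def)
  have part1: "\<phi> (w, i) \<in> seqs G (n+1)
            \<and> gval G (\<phi> (w, i)) = gval G w \<otimes>\<^bsub>G\<^esub> z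
            \<and> mu_prod \<mu> (\<phi> (w, i)) = mu_prod \<mu> w * \<mu> z
            \<and> card {p \<in> seqs G n \<times> {1..n+1}. \<phi> p = \<phi> (w, i)} = 1 + ell G z w"
    if w: "w \<in> seqs G n" and i: "i \<in> {1..n+1}" for w i
  proof -
    have ws: "set w \<subseteq> carrier G" and wl: "length w = n" using w by (auto simp: seqs_def)
    have k: "i - 1 \<le> length w" using i wl by auto
    have s: "\<phi> (w, i) \<in> seqs G (n+1)"
      using insz_set[OF z ws] insz_length[OF k] wl by (simp add: phi seqs_def)
    have d: "set (drop (i - 1) w) \<subseteq> carrier G" using ws by (auto dest: in_set_dropD)
    have "\<mu> (cjz G z (drop (i - 1) w)) = \<mu> z"
      unfolding cjz_def using A1 gval_closed[OF d] z by simp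
    then have m: "mu_prod \<mu> (\<phi> (w, i)) = mu_prod \<mu> w * \<mu> z"
      unfolding phi insz_def mu_prod_def
    proof -
      have "prod_list (map \<mu> w) = prod_list (map \<mu> (take (i - 1) w)) * prod_list (map \<mu> (drop (i - 1) w))"
        by (metis append_take_drop_id prod_list.append map_append)
      then show "prod_list (map \<mu> (take (i - 1) w @ cjz G z (drop (i - 1) w) # drop (i - 1) w))
          = prod_list (map \<mu> w) * \<mu> z"
        using \<open>\<mu> (cjz G z (drop (i - 1) w)) = \<mu> z\<close> by (simp add: prod_list.append)
    qed
    show ?thesis using s m insz_gval[OF z ws] cardfib[OF s] ell_insz[OF z ws k]
      by (simp add: phi ell_Pz)
  qed
  have part2: "\<eta> \<in> \<phi> ` (seqs G n \<times> {1..n+1}) \<longleftrightarrow> ell G z \<eta> \<noteq> 0"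
    if e: "\<eta> \<in> seqs G (n+1)" for \<eta>
  proof -
    have "\<eta> \<in> \<phi> ` (seqs G n \<times> {1..n+1}) \<longleftrightarrow> {p \<in> seqs G n \<times> {1..n+1}. \<phi> p = \<eta>} \<noteq> {}"
      by blast
    also have "\<dots> \<longleftrightarrow> {j. Pz G z \<eta> j} \<noteq> {}" unfolding fib[OF e] by simp
    also have "\<dots> \<longleftrightarrow> ell G z \<eta> \<noteq> 0" unfolding ell_Pz using finite_Pz[of G z \<eta>] by simp
    finally show ?thesis .
  qed
  show ?thesis using part1 part2 by blast
qed

end
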